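(* Let $I\ge 1$ and let $\lambda_h>0$, $\lambda_g>0$, $\lambda_\eta>0$ and $\lambda_1,\dots,\lambda_I>0$ be such that $\lambda_1,\dots,\lambda_I$ are pairwise distinct and $\lambda_\eta\neq\lambda_i$ for all $i$. Let $A,B,F,Z$ be independent random variables, where $A$ is exponential with rate $\lambda_h$; $B=E_1+\dots+E_I$ with $E_1,\dots,E_I$ independent and $E_i$ exponential with rate $\lambda_i$; $F$ is exponential with rate $\lambda_\eta$; and $Z$ has density $f_Z(z)=\frac{z}{\lambda_g^2}e^{-z/\lambda_g}$ for $z>0$. Let $L_\eta=\frac{A}{F+B}+Z$. Write $a_x=\frac{x}{\lambda_g\lambda_h}$ and $b_x=\frac{x+\lambda_h\gamma_{th}}{\lambda_g\lambda_h}$. Then for every $\gamma_{th}>0$, $$\mathbb{P}(L_\eta<\gamma_{th})=\sum_{i=1}^{I}\frac{c_i}{\lambda_g^3\lambda_h^2(\lambda_i-\lambda_\eta)}\Bigg\{\lambda_g e^{-\frac{\lambda_\eta+\lambda_i+\lambda_h\gamma_{th}}{\lambda_g\lambda_h}}\Big[e^{a_{\lambda_i}}\Big(\lambda_\eta\lambda_i(\lambda_\eta+\lambda_h\gamma_{th})\big(\mathrm{Ei}(a_{\lambda_\eta})-\mathrm{Ei}(b_{\lambda_\eta})\big)+\lambda_g\lambda_h^2(\lambda_\eta-\lambda_i)(\lambda_g+\gamma_{th})e^{a_{\lambda_\eta}}\Big)-\lambda_\eta\lambda_i e^{a_{\lambda_\eta}}(\lambda_i+\lambda_h\gamma_{th})\big(\mathrm{Ei}(a_{\lambda_i})-\mathrm{Ei}(b_{\lambda_i})\big)\Big]+\lambda_g^3\lambda_h^2(\lambda_i-\lambda_\eta)\Bigg\},$$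 where $c_i=\prod_{j=1,\,j\neq i}^{I}\frac{\lambda_j}{\lambda_j-\lambda_i}$ (with $c_1=1$ when $I=1$).
   Context: $\mathrm{Ei}(x)=\int_{-\infty}^{x}\frac{e^t}{t}\,dt$ (Cauchy principal value at $t=0$) is the exponential integral, used here for $x>0$. In the paper, $L_\eta$ models the (normalized) SINR of the $k$-th user in STBC-aided cooperative NOMA with perfect timing synchronization, perfect channel state information, and imperfect successive interference cancellation, where $F$ is the residual interference power left by imperfect SIC; $\mathbb{P}(L_\eta<\gamma_{th})$ is the outage probability at SINR threshold $\gamma_{th}$. *)

theory Defs
  imports "HOL-Probability.Probability"
begin

text \<open>Exponential integral Ei(x) = PV int_{-inf}^{x} e^t/t dt, used for x > 0:
  the Cauchy principal value at t = 0 is the limit as eps -> 0+ of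
  int_{-inf}^{-eps} e^t/t dt + int_{eps}^{x} e^t/t dt.\<close>
definition Ei :: "real \<Rightarrow> real" where
  "Ei x = Lim (at_right 0)
     (\<lambda>\<epsilon>::real. (LBINT t = -\<infinity>..ereal (-\<epsilon>). exp t / t) + (LBINT t = ereal \<epsilon>..ereal x. exp t / t))"

end

theory Submission
  imports Defs
begin

definition hsh :: "real \<Rightarrow> real" where
  "hsh t = (if t = 0 then 2 else (exp t - exp (-t)) / t)"

lemma isCont_hsh: "isCont hsh t"
proof (cases "t = 0")
  case True
  have "((\<lambda>t. exp t - exp (-t)) has_field_derivative (exp 0 + exp (-0))) (at 0)"
    by (auto intro!: derivative_eq_intros)
  then have "((\<lambda>h. ((exp (0+h) - exp (-(0+h))) - (exp 0 - exp (-0))) / h) \<longlongrightarrow> (2::real)) (at 0)"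
    by (simp add: DERIV_def)
  then have "((\<lambda>h. (exp h - exp (-h)) / h) \<longlongrightarrow> (2::real)) (at 0)" by simp
  then have "(hsh \<longlongrightarrow> 2) (at 0)"
    by (rule Lim_transform_eventually) (auto simp: hsh_def eventually_at_filter)
  then show ?thesis using True by (simp add: isCont_def hsh_def)
next
  case False
  have "eventually (\<lambda>x. (exp x - exp (-x)) / x = hsh x) (nhds t)"
    using False by (auto simp: hsh_def eventually_nhds intro!: exI[of _ "-{0}"])
  moreover have "isCont (\<lambda>x. (exp x - exp (-x)) / x) t"
    using False by (auto intro!: continuous_intros)
  ultimately show ?thesis using isCont_cong by metis
qed

lemma exp_div_integrable_neg:
  assumes "e > 0"
  shows "interval_lebesgue_integrable lborel (-\<infinity>) (ereal (-e)) (\<lambda>t. exp t / t)"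
proof -
  have "set_integrable lborel (einterval (-\<infinity>) (ereal (-e))) exp"
  proof (rule interval_integral_FTC_nonneg(1)[where F=exp and A=0 and B="exp (-e)"])
    show "((exp \<circ> real_of_ereal) \<longlongrightarrow> 0) (at_right (-\<infinity>))"
      unfolding ereal_tendsto_simps1 by (rule exp_at_bot)
    show "((exp \<circ> real_of_ereal) \<longlongrightarrow> exp (-e)) (at_left (ereal (-e)))"
      unfolding ereal_tendsto_simps1 by (intro tendsto_intros)
  qed (auto intro!: derivative_eq_intros continuous_intros)
  then have I: "set_integrable lborel (einterval (-\<infinity>) (ereal (-e))) (\<lambda>t. exp t / e)"
    by (auto intro: set_integrable_divide)
  have "set_integrable lborel (einterval (-\<infinity>) (ereal (-e))) (\<lambda>t. exp t / t)"
  proof (rule set_integrable_bound[OF I])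
    show "set_borel_measurable lborel (einterval (-\<infinity>) (ereal (-e))) (\<lambda>t. exp t / t)"
      unfolding set_borel_measurable_def by measurable
    show "AE x in lborel. x \<in> einterval (-\<infinity>) (ereal (-e)) \<longrightarrow> norm (exp x / x) \<le> norm (exp x / e)"
    proof (rule AE_I2, safe)
      fix x assume "x \<in> einterval (-\<infinity>) (ereal (-e))"
      then have x: "x < -e" by (simp add: einterval_iff)
      have "exp x / \<bar>x\<bar> \<le> exp x / e"
        using x assms by (intro divide_left_mono) (auto simp: mult_neg_pos)
      then show "norm (exp x / x) \<le> norm (exp x / e)" using assms by simp
    qed
  qed
  then show ?thesis by (simp add: interval_lebesgue_integrable_def)
qed


definition Pn :: "real \<Rightarrow> real" where
  "Pn e = (LBINT t = -\<infinity>..ereal (-e). exp t / t)"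

definition fE :: "real \<Rightarrow> real \<Rightarrow> real" where
  "fE x e = Pn e + (LBINT t = ereal e..ereal x. exp t / t)"

lemma Ei_fE: "Ei x = Lim (at_right 0) (fE x)"
  unfolding Ei_def fE_def Pn_def ..

lemma expdiv_integrable_pos:
  assumes "0 < a" "0 < b"
  shows "interval_lebesgue_integrable lborel (ereal a) (ereal b) (\<lambda>t. exp t / t)"
  using assms by (intro interval_integrable_isCont) (auto intro!: continuous_intros)

lemma fE1_eq:
  assumes e: "0 < e" "e < 1"
  shows "fE 1 e = Pn 1 + (LBINT t = ereal e..ereal 1. hsh t)"
proof -
  have s1: "Pn 1 + (LBINT t = ereal (-1)..ereal (-e). exp t / t) = Pn e"
    unfolding Pn_def
  proof (rule interval_integral_sum)
    have "max (-\<infinity>) (max (ereal (-1)) (ereal (-e))) = ereal (-e)" using e by auto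
    then show "interval_lebesgue_integrable lborel (min (- \<infinity>) (min (ereal (- 1)) (ereal (- e))))
       (max (- \<infinity>) (max (ereal (- 1)) (ereal (- e)))) (\<lambda>t. exp t / t)"
      using exp_div_integrable_neg[OF e(1)] by simp
  qed
  have s2: "(LBINT t = ereal (-1)..ereal (-e). exp t / t) = (LBINT t = ereal e..ereal 1. exp (-t) / (-t))"
    by (subst interval_integral_reflect) simp
  have i1: "interval_lebesgue_integrable lborel (ereal e) (ereal 1) (\<lambda>t. exp t / t)"
    using e by (intro expdiv_integrable_pos) auto
  have i2: "interval_lebesgue_integrable lborel (ereal e) (ereal 1) (\<lambda>t. exp (-t) / (-t))"
    using e by (intro interval_integrable_isCont) (auto intro!: continuous_intros)
  have s3: "(LBINT t = ereal e..ereal 1. exp t / t) + (LBINT t = ereal e..ereal 1. exp (-t) / (-t))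
      = (LBINT t = ereal e..ereal 1. exp t / t + exp (-t) / (-t))"
    using interval_lebesgue_integral_add(2)[OF i1 i2] by simp
  have s4: "(LBINT t = ereal e..ereal 1. exp t / t + exp (-t) / (-t)) = (LBINT t = ereal e..ereal 1. hsh t)"
    using e by (intro interval_lebesgue_integral_cong) (auto simp: einterval_iff hsh_def field_simps)
  show ?thesis
    unfolding fE_def using s1 s2 s3 s4 by linarith
qed

lemma hsh_tendsto: "((\<lambda>e. LBINT t = ereal e..ereal 1. hsh t) \<longlongrightarrow> (LBINT t = ereal 0..ereal 1. hsh t)) (at_right 0)"
proof -
  have "((\<lambda>u. LBINT y=ereal 1..ereal u. hsh y) has_vector_derivative (hsh 0)) (at 0 within {0..1})"
    by (rule interval_integral_FTC2[of 0 1 1 hsh 0]) (auto intro!: continuous_at_imp_continuous_on isCont_hsh)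
  then have "continuous (at 0 within {0..1}) (\<lambda>u. LBINT y=ereal 1..ereal u. hsh y)"
    by (rule has_vector_derivative_continuous)
  then have "((\<lambda>u. LBINT y=ereal 1..ereal u. hsh y) \<longlongrightarrow> (LBINT y=ereal 1..ereal 0. hsh y)) (at_right 0)"
    by (simp add: continuous_within at_within_Icc_at_right)
  then have "((\<lambda>u. - (LBINT y=ereal 1..ereal u. hsh y)) \<longlongrightarrow> - (LBINT y=ereal 1..ereal 0. hsh y)) (at_right 0)"
    by (rule tendsto_minus)
  then show ?thesis
    by (subst (1 2) interval_integral_endpoints_reverse) simp
qed

lemma fE1_tendsto: "(fE 1 \<longlongrightarrow> Pn 1 + (LBINT t = ereal 0..ereal 1. hsh t)) (at_right 0)"
proof -
  have "((\<lambda>e. Pn 1 + (LBINT t = ereal e..ereal 1. hsh t)) \<longlongrightarrow> Pn 1 + (LBINT t = ereal 0..ereal 1. hsh t)) (at_right 0)"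
    by (intro tendsto_add tendsto_const hsh_tendsto)
  moreover have "eventually (\<lambda>e. Pn 1 + (LBINT t = ereal e..ereal 1. hsh t) = fE 1 e) (at_right 0)"
    unfolding eventually_at_right_field
    by (rule exI[of _ 1]) (auto simp: fE1_eq)
  ultimately show ?thesis by (rule Lim_transform_eventually)
qed

lemma Ei_eq:
  assumes x: "0 < x"
  shows "Ei x = Ei 1 + (LBINT t = ereal 1..ereal x. exp t / t)"
proof -
  define L where "L = Pn 1 + (LBINT t = ereal 0..ereal 1. hsh t)"
  have E1: "Ei 1 = L"
    unfolding Ei_fE L_def by (rule tendsto_Lim[OF trivial_limit_at_right_real fE1_tendsto])
  have ev: "eventually (\<lambda>e. fE 1 e + (LBINT t = ereal 1..ereal x. exp t / t) = fE x e) (at_right 0)"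
    unfolding eventually_at_right_field
  proof (rule exI[of _ "min 1 x"], intro conjI allI impI)
    show "0 < min 1 x" using x by simp
    fix e :: real assume e: "0 < e" "e < min 1 x"
    have "(LBINT t = ereal e..ereal 1. exp t / t) + (LBINT t = ereal 1..ereal x. exp t / t)
         = (LBINT t = ereal e..ereal x. exp t / t)"
      by (rule interval_integral_sum)
         (use e x in \<open>auto simp: min_def max_def intro!: expdiv_integrable_pos\<close>)
    then show "fE 1 e + (LBINT t = ereal 1..ereal x. exp t / t) = fE x e"
      unfolding fE_def by simp
  qed
  have "(fE x \<longlongrightarrow> L + (LBINT t = ereal 1..ereal x. exp t / t)) (at_right 0)"
    using Lim_transform_eventually[OF tendsto_add[OF fE1_tendsto tendsto_const] ev]
    unfolding L_def .
  then have "Ei x = L + (LBINT t = ereal 1..ereal x. exp t / t)"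
    unfolding Ei_fE by (rule tendsto_Lim[OF trivial_limit_at_right_real])
  then show ?thesis using E1 by simp
qed

lemma Ei_eq2:
  assumes "0 < c" "0 < x"
  shows "Ei x = Ei c + (LBINT t = ereal c..ereal x. exp t / t)"
proof -
  have "(LBINT t = ereal 1..ereal c. exp t / t) + (LBINT t = ereal c..ereal x. exp t / t)
         = (LBINT t = ereal 1..ereal x. exp t / t)"
    by (rule interval_integral_sum)
       (use assms in \<open>auto simp: min_def max_def intro!: expdiv_integrable_pos\<close>)
  then show ?thesis using Ei_eq[OF assms(1)] Ei_eq[OF assms(2)] by simp
qed

lemma Ei_deriv:
  assumes x: "0 < x"
  shows "(Ei has_real_derivative exp x / x) (at x)"
proof -
  have "((\<lambda>u. LBINT y=(x/2)..u. exp y / y) has_vector_derivative (exp x / x)) (at x within {x/2..2*x})"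
    by (rule interval_integral_FTC2) (use x in \<open>auto intro!: continuous_intros\<close>)
  then have "((\<lambda>u. LBINT y=(x/2)..u. exp y / y) has_real_derivative (exp x / x)) (at x)"
    using x by (simp add: at_within_Icc_at has_real_derivative_iff_has_vector_derivative)
  then have "((\<lambda>u. Ei (x/2) + (LBINT y=(x/2)..u. exp y / y)) has_real_derivative (exp x / x)) (at x)"
    by (auto intro!: derivative_eq_intros)
  then show ?thesis
  proof (rule has_field_derivative_transform_within_open)
    show "open {0::real<..}" by simp
    show "x \<in> {0<..}" using x by simp
    fix u :: real assume "u \<in> {0<..}"
    then show "Ei (x/2) + (LBINT y=(x/2)..u. exp y / y) = Ei u"
      using Ei_eq2[of "x/2" u] x by simp
  qed
qed


lemma Ei_chain [derivative_intros]:
  assumes "(f has_real_derivative f') (at x within s)" "0 < f x"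
  shows "((\<lambda>x. Ei (f x)) has_real_derivative (exp (f x) / f x * f')) (at x within s)"
  using DERIV_chain2[OF Ei_deriv[OF assms(2)] assms(1)] .

lemma Ei_chain_eq:
  assumes "(f has_real_derivative f') (at x within s)" "0 < f x" "D = exp (f x) / f x * f'"
  shows "((\<lambda>x. Ei (f x)) has_real_derivative D) (at x within s)"
  using Ei_chain[OF assms(1,2)] assms(3) by simp

lemma fZ_int:
  fixes lg g :: real
  assumes lg: "0 < lg" and g: "0 \<le> g"
  shows "((\<lambda>z. z / lg\<^sup>2 * exp (- z / lg)) has_integral (1 - exp (- g / lg) * (1 + g / lg))) {0..g}"
proof -
  have "((\<lambda>z. z / lg\<^sup>2 * exp (- z / lg)) has_integral
     ((- (1 + g/lg) * exp (- g / lg)) - (- (1 + 0/lg) * exp (- 0 / lg)))) {0..g}"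
  proof (rule fundamental_theorem_of_calculus[OF g])
    fix x assume "x \<in> {0..g}"
    show "((\<lambda>z. - (1 + z/lg) * exp (- z / lg)) has_vector_derivative (x / lg\<^sup>2 * exp (- x / lg))) (at x within {0..g})"
      unfolding has_real_derivative_iff_has_vector_derivative[symmetric]
      using lg by (auto intro!: derivative_eq_intros simp: field_simps power2_eq_square)
  qed
  then show ?thesis by (simp add: algebra_simps)
qed

lemma J_int:
  assumes lg: "0 < lg" and lh: "0 < lh" and g: "0 \<le> g" and m: "0 < m"
  shows "((\<lambda>z. z / lg\<^sup>2 * exp (- z / lg) / (m + lh * (g - z))) has_integral
     (exp (- ((m + lh * g) / (lg * lh))) / (lg\<^sup>2 * lh) *
       ((g + m / lh) * (Ei ((m + lh * g) / (lg * lh)) - Ei (m / (lg * lh)))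
        - lg * (exp ((m + lh * g) / (lg * lh)) - exp (m / (lg * lh)))))) {0..g}"
proof -
  define K where "K = exp (- ((m + lh * g) / (lg * lh))) / (lg\<^sup>2 * lh)"
  define u where "u z = (m + lh * (g - z)) / (lg * lh)" for z
  define F where "F z = K * (lg * exp (u z) - (g + m / lh) * Ei (u z))" for z
  have u0: "u 0 = (m + lh * g) / (lg * lh)" and ug: "u g = m / (lg * lh)"
    by (simp_all add: u_def)
  have upos: "0 < u z" if "z \<in> {0..g}" for z
    using that lg lh m by (auto simp: u_def intro!: divide_pos_pos add_pos_nonneg)
  have "((\<lambda>z. z / lg\<^sup>2 * exp (- z / lg) / (m + lh * (g - z))) has_integral (F g - F 0)) {0..g}"
  proof (rule fundamental_theorem_of_calculus[OF g])
    fix x assume x: "x \<in> {0..g}"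
    have ux: "0 < u x" by (rule upos[OF x])
    have den: "0 < m + lh * (g - x)" using x lh m by (auto intro!: add_pos_nonneg)
    have e: "exp (u x) = exp (- x / lg) * exp ((m + lh * g) / (lg * lh))"
      unfolding exp_add[symmetric] u_def using lg lh by (intro arg_cong[where f=exp]) (simp add: field_simps)
    have Kexp: "K * exp (u x) = exp (- x / lg) / (lg\<^sup>2 * lh)"
      unfolding K_def e by (simp add: exp_minus field_simps)
    have du: "(u has_real_derivative (- 1 / lg)) (at x within {0..g})"
      unfolding u_def using lg lh by (auto intro!: derivative_eq_intros simp: field_simps)
    have "(F has_real_derivative (K * exp (u x)) * (- 1 / lg) * (lg - (g + m / lh) / u x)) (at x within {0..g})"
      unfolding F_def
      using lg lh ux by (auto intro!: derivative_eq_intros Ei_chain_eq du simp: field_simps)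
    also have "(K * exp (u x)) * (- 1 / lg) * (lg - (g + m / lh) / u x) = x / lg\<^sup>2 * exp (- x / lg) / (m + lh * (g - x))"
    proof -
      define W where "W = m + lh * (g - x)"
      have Wp: "0 < W" using den W_def by simp
      have ux': "u x = W / (lg * lh)" by (simp add: u_def W_def)
      have c1: "(- 1 / lg) * (lg - (g + m / lh) / u x) = lh * x / W"
        unfolding ux' using lg lh Wp by (simp add: field_simps) (simp add: W_def algebra_simps)
      show ?thesis
        unfolding Kexp mult.assoc c1 using lg lh Wp by (simp add: W_def[symmetric] field_simps power2_eq_square) (simp add: W_def algebra_simps)
    qed
    finally show "(F has_vector_derivative x / lg\<^sup>2 * exp (- x / lg) / (m + lh * (g - x))) (at x within {0..g})"
      unfolding has_real_derivative_iff_has_vector_derivative .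
  qed
  also have "F g - F 0 = K * ((g + m / lh) * (Ei ((m + lh * g) / (lg * lh)) - Ei (m / (lg * lh)))
        - lg * (exp ((m + lh * g) / (lg * lh)) - exp (m / (lg * lh))))"
    unfolding F_def u0 ug by (simp add: algebra_simps)
  finally show ?thesis unfolding K_def .
qed


lemma alg_core:
  fixes lg lh g ma mb pa pb q ea fa eb fb :: real
  assumes "0 < lg" "0 < lh" "0 < pa" "0 < pb" "0 < q" "mb \<noteq> ma"
  shows "(1 - (1/q) * (1 + g/lg)) - ma*mb/(mb-ma) *
     ((1/(pa*q))/(lg\<^sup>2*lh) * ((g + ma/lh)*(fa - ea) - lg*(pa*q - pa))
      - (1/(pb*q))/(lg\<^sup>2*lh) * ((g+mb/lh)*(fb - eb) - lg*(pb*q - pb)))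
   = 1/(lg^3*lh\<^sup>2*(mb-ma)) * (lg * (1/(pa*pb*q)) * (pb*(ma*mb*(ma+lh*g)*(ea - fa)
       + lg*lh\<^sup>2*(ma-mb)*(lg+g)*pa) - ma*mb*pa*(mb+lh*g)*(eb-fb)) + lg^3*lh\<^sup>2*(mb-ma))"
proof -
  have "mb - ma \<noteq> 0" using assms by simp
  then show ?thesis using assms
    by (simp add: field_simps power2_eq_square power3_eq_cube)
qed


lemma exp_split:
  fixes lg lh g m :: real
  assumes "0 < lg" "0 < lh"
  shows "exp ((m + lh * g) / (lg * lh)) = exp (m / (lg * lh)) * exp (g / lg)"
  unfolding exp_add[symmetric] using assms by (intro arg_cong[where f=exp]) (simp add: field_simps)

lemma exp_split3:
  fixes lg lh g m1 m2 :: real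
  assumes "0 < lg" "0 < lh"
  shows "exp (- (m1 + m2 + lh * g) / (lg * lh)) = 1 / (exp (m1 / (lg * lh)) * exp (m2 / (lg * lh)) * exp (g / lg))"
proof -
  have "exp (m1 / (lg * lh)) * exp (m2 / (lg * lh)) * exp (g / lg) = exp ((m1 + m2 + lh * g) / (lg * lh))"
    unfolding exp_add[symmetric] using assms by (intro arg_cong[where f=exp]) (simp add: field_simps)
  moreover have "- (m1 + m2 + lh * g) / (lg * lh) = - ((m1 + m2 + lh * g) / (lg * lh))" by (rule minus_divide_left[symmetric])
  ultimately show ?thesis by (simp only: exp_minus) (simp add: inverse_eq_divide)
qed

lemma core:
  fixes lg lh g m1 m2 :: real
  assumes lg: "0 < lg" and lh: "0 < lh" and g: "0 < g" and m1: "0 < m1" and m2: "0 < m2" and ne: "m1 \<noteq> m2"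
  shows "((\<lambda>z. z / lg\<^sup>2 * exp (- z / lg) *
      (1 - m1 * m2 / (m2 - m1) * (1 / (m1 + lh * (g - z)) - 1 / (m2 + lh * (g - z)))))
    has_integral
     (1 / (lg ^ 3 * lh\<^sup>2 * (m2 - m1)) *
          (lg * exp (- (m1 + m2 + lh * g) / (lg * lh)) *
             (exp (m2 / (lg * lh)) *
                (m1 * m2 * (m1 + lh * g) * (Ei (m1 / (lg * lh)) - Ei ((m1 + lh * g) / (lg * lh)))
                 + lg * lh\<^sup>2 * (m1 - m2) * (lg + g) * exp (m1 / (lg * lh)))
              - m1 * m2 * exp (m1 / (lg * lh)) * (m2 + lh * g) * (Ei (m2 / (lg * lh)) - Ei ((m2 + lh * g) / (lg * lh))))
           + lg ^ 3 * lh\<^sup>2 * (m2 - m1)))) {0..g}"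
proof -
  let ?f = "\<lambda>z. z / lg\<^sup>2 * exp (- z / lg)"
  note h0 = fZ_int[OF lg, of g] and h1 = J_int[OF lg lh _ m1, of g] and h2 = J_int[OF lg lh _ m2, of g]
  have h: "((\<lambda>z. ?f z - m1 * m2 / (m2 - m1) * (?f z / (m1 + lh * (g - z)) - ?f z / (m2 + lh * (g - z)))) has_integral
     ((1 - exp (- g / lg) * (1 + g / lg)) - m1 * m2 / (m2 - m1) *
       (exp (- ((m1 + lh * g) / (lg * lh))) / (lg\<^sup>2 * lh) *
       ((g + m1 / lh) * (Ei ((m1 + lh * g) / (lg * lh)) - Ei (m1 / (lg * lh)))
        - lg * (exp ((m1 + lh * g) / (lg * lh)) - exp (m1 / (lg * lh))))
       - exp (- ((m2 + lh * g) / (lg * lh))) / (lg\<^sup>2 * lh) *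
       ((g + m2 / lh) * (Ei ((m2 + lh * g) / (lg * lh)) - Ei (m2 / (lg * lh)))
        - lg * (exp ((m2 + lh * g) / (lg * lh)) - exp (m2 / (lg * lh))))))) {0..g}"
    using g by (intro has_integral_diff has_integral_mult_right h0 h1 h2) auto
  have val: "((1 - exp (- g / lg) * (1 + g / lg)) - m1 * m2 / (m2 - m1) *
       (exp (- ((m1 + lh * g) / (lg * lh))) / (lg\<^sup>2 * lh) *
       ((g + m1 / lh) * (Ei ((m1 + lh * g) / (lg * lh)) - Ei (m1 / (lg * lh)))
        - lg * (exp ((m1 + lh * g) / (lg * lh)) - exp (m1 / (lg * lh))))
       - exp (- ((m2 + lh * g) / (lg * lh))) / (lg\<^sup>2 * lh) *
       ((g + m2 / lh) * (Ei ((m2 + lh * g) / (lg * lh)) - Ei (m2 / (lg * lh)))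
        - lg * (exp ((m2 + lh * g) / (lg * lh)) - exp (m2 / (lg * lh))))))
    = (1 / (lg ^ 3 * lh\<^sup>2 * (m2 - m1)) *
          (lg * exp (- (m1 + m2 + lh * g) / (lg * lh)) *
             (exp (m2 / (lg * lh)) *
                (m1 * m2 * (m1 + lh * g) * (Ei (m1 / (lg * lh)) - Ei ((m1 + lh * g) / (lg * lh)))
                 + lg * lh\<^sup>2 * (m1 - m2) * (lg + g) * exp (m1 / (lg * lh)))
              - m1 * m2 * exp (m1 / (lg * lh)) * (m2 + lh * g) * (Ei (m2 / (lg * lh)) - Ei ((m2 + lh * g) / (lg * lh))))
           + lg ^ 3 * lh\<^sup>2 * (m2 - m1)))"
    unfolding exp_minus[of "(m1 + lh * g) / (lg * lh)"] exp_minus[of "(m2 + lh * g) / (lg * lh)"]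
      exp_split[OF lg lh] exp_split3[OF lg lh] 
    using alg_core[where lg=lg and lh=lh and g=g and ma=m1 and mb=m2 and pa="exp (m1 / (lg * lh))"
        and pb="exp (m2 / (lg * lh))" and q="exp (g / lg)" and ea="Ei (m1 / (lg * lh))"
        and fa="Ei ((m1 + lh * g) / (lg * lh))" and eb="Ei (m2 / (lg * lh))" and fb="Ei ((m2 + lh * g) / (lg * lh))",
        OF lg lh exp_gt_zero exp_gt_zero exp_gt_zero ne[symmetric]]
    by (simp add: exp_minus inverse_eq_divide mult.assoc)
  show ?thesis
    unfolding val[symmetric]
    by (rule has_integral_eq[OF _ h]) (simp add: divide_inverse algebra_simps)
qed


lemma split_aux:
  fixes a b s :: real
  assumes "a \<noteq> b" "b + s \<noteq> 0" "a + s \<noteq> 0"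
  shows "b / (b + s) * (a / (a + s)) = b / (b - a) * (a / (a + s)) + b / (b + s) * (a / (a + - b))"
proof -
  have 1: "b - a \<noteq> 0" "a - b \<noteq> 0" using assms by auto
  have "b / (b - a) * (a / (a + s)) + b / (b + s) * (a / (a - b)) = (b * a * (b + s) - b * a * (a + s)) / ((b - a) * (a + s) * (b + s))"
    using 1 assms by (simp add: divide_simps) (simp add: algebra_simps)
  also have "\<dots> = b * a * (b - a) / ((b - a) * (a + s) * (b + s))"
    by (simp add: algebra_simps)
  also have "\<dots> = b / (b + s) * (a / (a + s))"
    using 1 assms by simp
  finally show ?thesis by simp
qed

lemma pf:
  fixes l :: "nat \<Rightarrow> real"
  assumes "finite K" "K \<noteq> {}" "inj_on l K" "\<forall>i\<in>K. l i + s \<noteq> 0"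
  shows "(\<Prod>i\<in>K. l i / (l i + s)) = (\<Sum>i\<in>K. (\<Prod>j\<in>K-{i}. l j / (l j - l i)) * (l i / (l i + s)))"
  using assms
proof (induction K arbitrary: s rule: finite_ne_induct)
  case (singleton k)
  then show ?case by simp
next
  case (insert k K)
  have inj: "inj_on l K" using insert.prems by simp
  have lk: "\<forall>i\<in>K. l i \<noteq> l k" using insert.prems insert.hyps by (auto simp: inj_on_def)
  have sk: "l k + s \<noteq> 0" and si: "\<forall>i\<in>K. l i + s \<noteq> 0" using insert.prems by auto
  have IH1: "(\<Prod>i\<in>K. l i / (l i + s)) = (\<Sum>i\<in>K. (\<Prod>j\<in>K-{i}. l j / (l j - l i)) * (l i / (l i + s)))"
    using insert.IH[OF inj si] .
  have IH2: "(\<Prod>i\<in>K. l i / (l i + - l k)) = (\<Sum>i\<in>K. (\<Prod>j\<in>K-{i}. l j / (l j - l i)) * (l i / (l i + - l k)))"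
  proof -
    have "\<forall>i\<in>K. l i + - l k \<noteq> 0" using lk by auto
    from insert.IH[OF inj this] show ?thesis .
  qed
  have split: "l k / (l k + s) * (l i / (l i + s)) = l k / (l k - l i) * (l i / (l i + s)) + l k / (l k + s) * (l i / (l i + - l k))"
    if "i \<in> K" for i
  proof -
    have "l i \<noteq> l k" "l i + s \<noteq> 0" using lk si that by auto
    then have "l k - l i \<noteq> 0" "l i - l k \<noteq> 0" by auto
    then show ?thesis using sk \<open>l i + s \<noteq> 0\<close> by (intro split_aux) auto
  qed
  have ck: "(\<Prod>j\<in>insert k K - {k}. l j / (l j - l k)) = (\<Prod>j\<in>K. l j / (l j - l k))"
    using insert.hyps by (simp add: insert_Diff_if)
  have ci: "(\<Prod>j\<in>insert k K - {i}. l j / (l j - l i)) = l k / (l k - l i) * (\<Prod>j\<in>K - {i}. l j / (l j - l i))"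
    if "i \<in> K" for i
  proof -
    have "insert k K - {i} = insert k (K - {i})" using that insert.hyps by auto
    then show ?thesis using insert.hyps by simp
  qed
  have "(\<Prod>i\<in>insert k K. l i / (l i + s)) = l k / (l k + s) * (\<Sum>i\<in>K. (\<Prod>j\<in>K-{i}. l j / (l j - l i)) * (l i / (l i + s)))"
    using insert.hyps IH1 by simp
  also have "\<dots> = (\<Sum>i\<in>K. (\<Prod>j\<in>K-{i}. l j / (l j - l i)) * (l k / (l k + s) * (l i / (l i + s))))"
    by (simp add: sum_distrib_left mult_ac)
  also have "\<dots> = (\<Sum>i\<in>K. (\<Prod>j\<in>K-{i}. l j / (l j - l i)) * (l k / (l k - l i) * (l i / (l i + s))))
      + l k / (l k + s) * (\<Sum>i\<in>K. (\<Prod>j\<in>K-{i}. l j / (l j - l i)) * (l i / (l i + - l k)))"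
  proof -
    have "(\<Sum>i\<in>K. (\<Prod>j\<in>K-{i}. l j / (l j - l i)) * (l k / (l k + s) * (l i / (l i + s))))
      = (\<Sum>i\<in>K. (\<Prod>j\<in>K-{i}. l j / (l j - l i)) * (l k / (l k - l i) * (l i / (l i + s)) + l k / (l k + s) * (l i / (l i + - l k))))"
      by (intro sum.cong refl) (simp only: split)
    then show ?thesis by (simp add: distrib_left sum.distrib sum_distrib_left mult_ac)
  qed
  also have "\<dots> = (\<Sum>i\<in>K. (\<Prod>j\<in>insert k K - {i}. l j / (l j - l i)) * (l i / (l i + s)))
      + (\<Prod>j\<in>insert k K - {k}. l j / (l j - l k)) * (l k / (l k + s))"
    unfolding IH2[symmetric] ck by (simp add: ci mult_ac cong: sum.cong)
  also have "\<dots> = (\<Sum>i\<in>insert k K. (\<Prod>j\<in>insert k K-{i}. l j / (l j - l i)) * (l i / (l i + s)))"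
    using insert.hyps by (simp add: add.commute)
  finally show ?case .
qed


lemma csum1:
  fixes l :: "nat \<Rightarrow> real"
  assumes "finite K" "K \<noteq> {}" "inj_on l K" "\<forall>i\<in>K. l i > 0"
  shows "(\<Sum>i\<in>K. (\<Prod>j\<in>K-{i}. l j / (l j - l i))) = 1"
proof -
  have "(\<Prod>i\<in>K. l i / (l i + 0)) = (\<Sum>i\<in>K. (\<Prod>j\<in>K-{i}. l j / (l j - l i)) * (l i / (l i + 0)))"
    using assms by (intro pf) auto
  moreover have "(\<Prod>i\<in>K. l i / (l i + 0)) = 1" using assms by (auto intro!: prod.neutral)
  moreover have "(\<Sum>i\<in>K. (\<Prod>j\<in>K-{i}. l j / (l j - l i)) * (l i / (l i + 0))) = (\<Sum>i\<in>K. (\<Prod>j\<in>K-{i}. l j / (l j - l i)))"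
    using assms by (intro sum.cong) auto
  ultimately show ?thesis by simp
qed

lemma pair_pf:
  fixes a b s :: real
  assumes "0 < a" "0 < b" "a \<noteq> b" "0 \<le> s"
  shows "a / (a + s) * (b / (b + s)) = a * b / (b - a) * (1 / (a + s) - 1 / (b + s))"
proof -
  have nz: "b - a \<noteq> 0" "a + s \<noteq> 0" "b + s \<noteq> 0" using assms by auto
  have "1 / (a + s) - 1 / (b + s) = (b - a) / ((a + s) * (b + s))" using nz by (simp add: divide_simps)
  then have "a * b / (b - a) * (1 / (a + s) - 1 / (b + s)) = a * b / ((a + s) * (b + s))"
    using nz by simp
  then show ?thesis by simp
qed

lemma k_integral:
  fixes lh lg le g :: real and l :: "nat \<Rightarrow> real" and I :: nat
  assumes I: "I \<ge> 1" and lh: "lh > 0" and lg: "lg > 0" and le: "le > 0" and g: "g > 0"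
    and lpos: "\<forall>i\<in>{1..I}. l i > 0" and inj: "inj_on l {1..I}" and lne: "\<forall>i\<in>{1..I}. le \<noteq> l i"
  shows "((\<lambda>z. z / lg\<^sup>2 * exp (- z / lg) * (1 - le / (le + lh * (g - z)) * (\<Prod>i\<in>{1..I}. l i / (l i + lh * (g - z)))))
    has_integral
    (\<Sum>i=1..I.
       let c = (\<Prod>j\<in>{1..I} - {i}. l j / (l j - l i));
           a = (\<lambda>x. x / (lg * lh));
           b = (\<lambda>x. (x + lh * g) / (lg * lh))
       in c / (lg ^ 3 * lh\<^sup>2 * (l i - le)) *
          (lg * exp (- (le + l i + lh * g) / (lg * lh)) *
             (exp (a (l i)) *
                (le * l i * (le + lh * g) * (Ei (a le) - Ei (b le))
                 + lg * lh\<^sup>2 * (le - l i) * (lg + g) * exp (a le))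
              - le * l i * exp (a le) * (l i + lh * g) * (Ei (a (l i)) - Ei (b (l i))))
           + lg ^ 3 * lh\<^sup>2 * (l i - le)))) {0..g}"
proof -
  define c where "c i = (\<Prod>j\<in>{1..I} - {i}. l j / (l j - l i))" for i
  have ne: "{1..I} \<noteq> {}" using I by auto
  have cs: "(\<Sum>i\<in>{1..I}. c i) = 1" unfolding c_def using csum1[OF _ ne inj lpos] by simp
  have each: "((\<lambda>z. c i * (z / lg\<^sup>2 * exp (- z / lg) *
      (1 - le * l i / (l i - le) * (1 / (le + lh * (g - z)) - 1 / (l i + lh * (g - z)))))) has_integral
      c i * (1 / (lg ^ 3 * lh\<^sup>2 * (l i - le)) *
          (lg * exp (- (le + l i + lh * g) / (lg * lh)) *
             (exp (l i / (lg * lh)) *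
                (le * l i * (le + lh * g) * (Ei (le / (lg * lh)) - Ei ((le + lh * g) / (lg * lh)))
                 + lg * lh\<^sup>2 * (le - l i) * (lg + g) * exp (le / (lg * lh)))
              - le * l i * exp (le / (lg * lh)) * (l i + lh * g) * (Ei (l i / (lg * lh)) - Ei ((l i + lh * g) / (lg * lh))))
           + lg ^ 3 * lh\<^sup>2 * (l i - le)))) {0..g}" if i: "i \<in> {1..I}" for i
    using i lpos lne by (intro has_integral_mult_right core[OF lg lh g le]) auto
  have sum: "((\<lambda>z. \<Sum>i\<in>{1..I}. c i * (z / lg\<^sup>2 * exp (- z / lg) *
      (1 - le * l i / (l i - le) * (1 / (le + lh * (g - z)) - 1 / (l i + lh * (g - z)))))) has_integral
      (\<Sum>i\<in>{1..I}. c i * (1 / (lg ^ 3 * lh\<^sup>2 * (l i - le)) *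
          (lg * exp (- (le + l i + lh * g) / (lg * lh)) *
             (exp (l i / (lg * lh)) *
                (le * l i * (le + lh * g) * (Ei (le / (lg * lh)) - Ei ((le + lh * g) / (lg * lh)))
                 + lg * lh\<^sup>2 * (le - l i) * (lg + g) * exp (le / (lg * lh)))
              - le * l i * exp (le / (lg * lh)) * (l i + lh * g) * (Ei (l i / (lg * lh)) - Ei ((l i + lh * g) / (lg * lh))))
           + lg ^ 3 * lh\<^sup>2 * (l i - le))))) {0..g}"
    by (rule has_integral_sum) (use each in auto)
  have pt: "(\<Sum>i\<in>{1..I}. c i * (z / lg\<^sup>2 * exp (- z / lg) *
      (1 - le * l i / (l i - le) * (1 / (le + lh * (g - z)) - 1 / (l i + lh * (g - z))))))
     = z / lg\<^sup>2 * exp (- z / lg) * (1 - le / (le + lh * (g - z)) * (\<Prod>i\<in>{1..I}. l i / (l i + lh * (g - z))))"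
    if z: "z \<in> {0..g}" for z
  proof -
    define s where "s = lh * (g - z)"
    have s: "0 \<le> s" using z lh by (simp add: s_def)
    have P: "(\<Prod>i\<in>{1..I}. l i / (l i + s)) = (\<Sum>i\<in>{1..I}. c i * (l i / (l i + s)))"
      unfolding c_def using s lpos by (intro pf[OF _ ne inj]) auto
    have "(\<Sum>i\<in>{1..I}. c i * (1 - le * l i / (l i - le) * (1 / (le + s) - 1 / (l i + s))))
        = (\<Sum>i\<in>{1..I}. c i) - (\<Sum>i\<in>{1..I}. c i * (le / (le + s) * (l i / (l i + s))))"
    proof -
      have "c i * (1 - le * l i / (l i - le) * (1 / (le + s) - 1 / (l i + s))) = c i - c i * (le / (le + s) * (l i / (l i + s)))"
        if "i \<in> {1..I}" for i
      proof -
        have pp: "le / (le + s) * (l i / (l i + s)) = le * l i / (l i - le) * (1 / (le + s) - 1 / (l i + s))"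
          using that lpos lne le s by (intro pair_pf) auto
        show ?thesis by (simp only: pp) (simp add: algebra_simps)
      qed
      then show ?thesis by (simp add: sum_subtractf[symmetric])
    qed
    also have "\<dots> = 1 - le / (le + s) * (\<Prod>i\<in>{1..I}. l i / (l i + s))"
      unfolding cs P by (simp add: sum_distrib_left mult_ac)
    finally have "(\<Sum>i\<in>{1..I}. c i * (1 - le * l i / (l i - le) * (1 / (le + s) - 1 / (l i + s))))
       = 1 - le / (le + s) * (\<Prod>i\<in>{1..I}. l i / (l i + s))" .
    moreover have "(\<Sum>i\<in>{1..I}. c i * (z / lg\<^sup>2 * exp (- z / lg) * (1 - le * l i / (l i - le) * (1 / (le + s) - 1 / (l i + s)))))
       = z / lg\<^sup>2 * exp (- z / lg) * (\<Sum>i\<in>{1..I}. c i * (1 - le * l i / (l i - le) * (1 / (le + s) - 1 / (l i + s))))"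
      by (simp only: sum_distrib_left mult.left_commute)
    ultimately show ?thesis unfolding s_def by simp
  qed
  have "((\<lambda>z. z / lg\<^sup>2 * exp (- z / lg) * (1 - le / (le + lh * (g - z)) * (\<Prod>i\<in>{1..I}. l i / (l i + lh * (g - z)))))
    has_integral
      (\<Sum>i\<in>{1..I}. c i * (1 / (lg ^ 3 * lh\<^sup>2 * (l i - le)) *
          (lg * exp (- (le + l i + lh * g) / (lg * lh)) *
             (exp (l i / (lg * lh)) *
                (le * l i * (le + lh * g) * (Ei (le / (lg * lh)) - Ei ((le + lh * g) / (lg * lh)))
                 + lg * lh\<^sup>2 * (le - l i) * (lg + g) * exp (le / (lg * lh)))
              - le * l i * exp (le / (lg * lh)) * (l i + lh * g) * (Ei (l i / (lg * lh)) - Ei ((l i + lh * g) / (lg * lh))))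
           + lg ^ 3 * lh\<^sup>2 * (l i - le))))) {0..g}"
    by (rule has_integral_eq[OF _ sum]) (use pt in auto)
  then show ?thesis by (simp add: Let_def c_def)
qed


lemma freeze:
  fixes X :: "'a \<Rightarrow> 'b" and W :: "'a \<Rightarrow> 'b" and h :: "'b \<times> 'b \<Rightarrow> ennreal"
  assumes "prob_space M" "prob_space.indep_var M B X N W"
    and hm: "h \<in> borel_measurable (B \<Otimes>\<^sub>M N)"
  shows "(\<integral>\<^sup>+\<omega>. h (X \<omega>, W \<omega>) \<partial>M) = (\<integral>\<^sup>+\<omega>. (\<integral>\<^sup>+x. h (x, W \<omega>) \<partial>distr M B X) \<partial>M)"
proof -
  interpret prob_space M by fact
  have rvX[measurable]: "X \<in> measurable M B" and rvW[measurable]: "W \<in> measurable M N"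
    using indep_var_rv1[OF assms(2)] indep_var_rv2[OF assms(2)] by auto
  have eq: "distr M B X \<Otimes>\<^sub>M distr M N W = distr M (B \<Otimes>\<^sub>M N) (\<lambda>x. (X x, W x))"
    using indep_var_distribution_eq assms(2) by blast
  interpret DX: prob_space "distr M B X" by (rule prob_space_distr) simp
  interpret DW: prob_space "distr M N W" by (rule prob_space_distr) simp
  interpret P: pair_sigma_finite "distr M B X" "distr M N W" ..
  have sets_eq: "sets (distr M B X \<Otimes>\<^sub>M distr M N W) = sets (B \<Otimes>\<^sub>M N)"
    by (intro sets_pair_measure_cong) simp_all
  have hm': "h \<in> borel_measurable (distr M B X \<Otimes>\<^sub>M distr M N W)"
    using hm measurable_cong_sets[OF sets_eq refl] by blast
  have hsw: "(\<lambda>(w, x). h (x, w)) \<in> borel_measurable (N \<Otimes>\<^sub>M distr M B X)"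
  proof -
    have "(\<lambda>p. h (snd p, fst p)) \<in> borel_measurable (N \<Otimes>\<^sub>M B)"
      using hm by measurable
    moreover have "sets (N \<Otimes>\<^sub>M distr M B X) = sets (N \<Otimes>\<^sub>M B)"
      by (intro sets_pair_measure_cong) simp_all
    ultimately show ?thesis
      using measurable_cong_sets by (auto simp: case_prod_beta)
  qed
  have inner_m: "(\<lambda>w. \<integral>\<^sup>+x. h (x, w) \<partial>distr M B X) \<in> borel_measurable N"
    using DX.borel_measurable_nn_integral[of "\<lambda>w x. h (x, w)" N] hsw by simp
  have "(\<integral>\<^sup>+\<omega>. h (X \<omega>, W \<omega>) \<partial>M) = (\<integral>\<^sup>+p. h p \<partial>distr M (B \<Otimes>\<^sub>M N) (\<lambda>x. (X x, W x)))"
    by (subst nn_integral_distr) (auto intro: hm)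
  also have "\<dots> = (\<integral>\<^sup>+p. h p \<partial>(distr M B X \<Otimes>\<^sub>M distr M N W))"
    by (simp add: eq)
  also have "\<dots> = (\<integral>\<^sup>+w. (\<integral>\<^sup>+x. h (x, w) \<partial>distr M B X) \<partial>distr M N W)"
    by (rule P.nn_integral_snd[OF hm', symmetric])
  also have "\<dots> = (\<integral>\<^sup>+\<omega>. (\<integral>\<^sup>+x. h (x, W \<omega>) \<partial>distr M B X) \<partial>M)"
    by (subst nn_integral_distr) (auto intro: inner_m)
  finally show ?thesis .
qed

lemma indep_pair_from:
  fixes X :: "nat \<Rightarrow> 'a \<Rightarrow> real"
  assumes "prob_space M" "prob_space.indep_vars M (\<lambda>_. borel) X K"
    and "J1 \<subseteq> K" "J2 \<subseteq> K" "J1 \<inter> J2 = {}"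
    and "f1 \<in> measurable (PiM J1 (\<lambda>_. borel)) N1" "f2 \<in> measurable (PiM J2 (\<lambda>_. borel)) N2"
  shows "prob_space.indep_var M N1 (\<lambda>\<omega>. f1 (\<lambda>i\<in>J1. X i \<omega>)) N2 (\<lambda>\<omega>. f2 (\<lambda>i\<in>J2. X i \<omega>))"
proof -
  interpret prob_space M by fact
  have "indep_var (PiM J1 (\<lambda>_. borel)) (\<lambda>\<omega>. \<lambda>i\<in>J1. X i \<omega>) (PiM J2 (\<lambda>_. borel)) (\<lambda>\<omega>. \<lambda>i\<in>J2. X i \<omega>)"
    using indep_var_restrict[OF assms(2) assms(5) assms(3) assms(4)] .
  from indep_var_compose[OF this assms(6) assms(7)] show ?thesis by (simp add: comp_def)
qed


lemma expo_lt:
  fixes l c :: real assumes l: "0 < l"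
  shows "(\<integral>\<^sup>+a. ennreal (exponential_density l a) * indicator {..<c} a \<partial>lborel)
    = ennreal (if 0 \<le> c then 1 - exp (- c * l) else 0)"
proof (cases "0 \<le> c")
  case False
  have "(\<integral>\<^sup>+a. ennreal (exponential_density l a) * indicator {..<c} a \<partial>lborel) = (\<integral>\<^sup>+a. 0 \<partial>(lborel::real measure))"
    using False by (intro nn_integral_cong) (auto simp: exponential_density_def split: split_indicator)
  then show ?thesis using False by simp
next
  case True
  have "(\<integral>\<^sup>+a. ennreal (exponential_density l a) * indicator {..<c} a \<partial>lborel)
      = (\<integral>\<^sup>+a. ennreal (l * exp (- a * l)) * indicator {0..c} a \<partial>lborel)"
  proof (rule nn_integral_cong_AE)
    show "AE a in lborel. ennreal (exponential_density l a) * indicator {..<c} a = ennreal (l * exp (- a * l)) * indicator {0..c} a"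
      using AE_lborel_singleton[of c]
      by eventually_elim (auto simp: exponential_density_def split: split_indicator)
  qed
  also have "\<dots> = ennreal ((- exp (- c * l)) - (- exp (- 0 * l)))"
  proof (rule nn_integral_FTC_Icc)
    fix x :: real assume "x \<in> {0..c}"
    show "((\<lambda>x. - exp (- x * l)) has_real_derivative l * exp (- x * l)) (at x)"
      by (auto intro!: derivative_eq_intros)
    show "0 \<le> l * exp (- x * l)" using l by simp
  qed (use True in auto)
  finally show ?thesis using True by simp
qed

lemma expo_laplace:
  fixes l s :: real
  assumes "prob_space M" and l: "0 < l" and s: "0 \<le> s"
    and D: "distributed M lborel X (exponential_density l)"
  shows "(\<integral>\<^sup>+\<omega>. ennreal (exp (- s * X \<omega>)) \<partial>M) = ennreal (l / (l + s))"
proof -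
  have "(\<integral>\<^sup>+\<omega>. ennreal (exp (- s * X \<omega>)) \<partial>M)
      = (\<integral>\<^sup>+x. ennreal (exponential_density l x) * ennreal (exp (- s * x)) \<partial>lborel)"
    by (rule distributed_nn_integral[OF D, symmetric]) simp
  also have "\<dots> = (\<integral>\<^sup>+x. ennreal (l / (l + s)) * ennreal (erlang_density 0 (l + s) x * x ^ 0) \<partial>lborel)"
  proof (intro nn_integral_cong)
    fix x :: real
    have "exponential_density l x * exp (- s * x) = l / (l + s) * (erlang_density 0 (l + s) x * x ^ 0)"
      using l s by (auto simp: exponential_density_def erlang_density_def exp_add[symmetric] field_simps)
    then show "ennreal (exponential_density l x) * ennreal (exp (- s * x)) = ennreal (l / (l + s)) * ennreal (erlang_density 0 (l + s) x * x ^ 0)"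
      using l s by (simp add: ennreal_mult[symmetric] exponential_density_nonneg)
  qed
  also have "\<dots> = ennreal (l / (l + s)) * (\<integral>\<^sup>+x. ennreal (erlang_density 0 (l + s) x * x ^ 0) \<partial>lborel)"
    by (rule nn_integral_cmult) simp
  also have "\<dots> = ennreal (l / (l + s))"
    using l s by (subst nn_integral_erlang_ith_moment) auto
  finally show ?thesis .
qed

lemma expo_AE_pos:
  assumes "prob_space M" and l: "0 < l" and D: "distributed M lborel X (exponential_density l)"
  shows "AE \<omega> in M. 0 < X \<omega>"
proof -
  interpret prob_space M by fact
  have "AE x in lborel. 0 < ennreal (exponential_density l x) \<longrightarrow> 0 < x"
    using AE_lborel_singleton[of 0]
    by eventually_elim (auto simp: exponential_density_def split: if_splits)
  then show ?thesis
    using distributed_AE2[OF D, of "\<lambda>x. 0 < x"] by simp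
qed


lemma indep_var_nn:
  fixes X1 X2 :: "'a \<Rightarrow> real"
  assumes "prob_space M" "prob_space.indep_var M borel X1 borel X2"
    and "\<And>\<omega>. 0 \<le> X1 \<omega>" "\<And>\<omega>. 0 \<le> X2 \<omega>"
  shows "(\<integral>\<^sup>+\<omega>. ennreal (X1 \<omega> * X2 \<omega>) \<partial>M) = (\<integral>\<^sup>+\<omega>. ennreal (X1 \<omega>) \<partial>M) * (\<integral>\<^sup>+\<omega>. ennreal (X2 \<omega>) \<partial>M)"
proof -
  interpret prob_space M by fact
  have **: "(\<lambda> _. borel) = case_bool borel borel"
    by (rule ext, metis (full_types) bool.simps(3) bool.simps(4))
  have ind: "indep_vars (\<lambda>_. borel) (case_bool X1 X2) UNIV"
    using assms(2) unfolding indep_var_def ** .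
  have ind': "indep_vars (\<lambda>_. borel) (\<lambda>b \<omega>. ennreal (case_bool X1 X2 b \<omega>)) UNIV"
    by (rule indep_vars_compose2[OF ind]) simp
  have "(\<integral>\<^sup>+\<omega>. (\<Prod>i\<in>UNIV. ennreal (case_bool X1 X2 i \<omega>)) \<partial>M) = (\<Prod>i\<in>UNIV. \<integral>\<^sup>+\<omega>. ennreal (case_bool X1 X2 i \<omega>) \<partial>M)"
    by (rule indep_vars_nn_integral[OF _ ind']) auto
  then show ?thesis using assms(3,4) by (simp add: UNIV_bool mult.commute ennreal_mult)
qed

theorem lemma2:
  fixes M :: "'a measure"
    and A F Z :: "'a \<Rightarrow> real"
    and E :: "nat \<Rightarrow> 'a \<Rightarrow> real"
    and I :: nat
    and lh lg le g :: real
    and l :: "nat \<Rightarrow> real"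
  assumes "prob_space M"
    and "I \<ge> 1"
    and "lh > 0" and "lg > 0" and "le > 0"
    and "\<forall>i\<in>{1..I}. l i > 0"
    and "inj_on l {1..I}"
    and "\<forall>i\<in>{1..I}. le \<noteq> l i"
    and "prob_space.indep_vars M (\<lambda>_. borel) E {1..I}"
    and "\<forall>i\<in>{1..I}. distributed M lborel (E i) (exponential_density (l i))"
    and "prob_space.indep_vars M (\<lambda>_. borel)
           (\<lambda>k. [A, (\<lambda>\<omega>. \<Sum>i=1..I. E i \<omega>), F, Z] ! k) {0..<4}"
    and "distributed M lborel A (exponential_density lh)"
    and "distributed M lborel F (exponential_density le)"
    and "distributed M lborel Z
           (\<lambda>z. ennreal (if z > 0 then z / lg\<^sup>2 * exp (- z / lg) else 0))"
    and "g > 0"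
  shows "measure M {\<omega> \<in> space M. A \<omega> / (F \<omega> + (\<Sum>i=1..I. E i \<omega>)) + Z \<omega> < g} =
    (\<Sum>i=1..I.
       let c = (\<Prod>j\<in>{1..I} - {i}. l j / (l j - l i));
           a = (\<lambda>x. x / (lg * lh));
           b = (\<lambda>x. (x + lh * g) / (lg * lh))
       in c / (lg ^ 3 * lh\<^sup>2 * (l i - le)) *
          (lg * exp (- (le + l i + lh * g) / (lg * lh)) *
             (exp (a (l i)) *
                (le * l i * (le + lh * g) * (Ei (a le) - Ei (b le))
                 + lg * lh\<^sup>2 * (le - l i) * (lg + g) * exp (a le))
              - le * l i * exp (a le) * (l i + lh * g) * (Ei (a (l i)) - Ei (b (l i))))
           + lg ^ 3 * lh\<^sup>2 * (l i - le)))"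
proof -
  note prob = assms(1)
  interpret prob_space M by (rule prob)
  have I: "I \<ge> 1" and lh: "lh > 0" and lg: "lg > 0" and le: "le > 0" and lpos: "\<forall>i\<in>{1..I}. l i > 0"
    and inj: "inj_on l {1..I}" and lne: "\<forall>i\<in>{1..I}. le \<noteq> l i" and indE: "indep_vars (\<lambda>_. borel) E {1..I}"
    and dE: "\<forall>i\<in>{1..I}. distributed M lborel (E i) (exponential_density (l i))"
    and dA: "distributed M lborel A (exponential_density lh)"
    and dF: "distributed M lborel F (exponential_density le)"
    and dZ: "distributed M lborel Z (\<lambda>z. ennreal (if z > 0 then z / lg\<^sup>2 * exp (- z / lg) else 0))"
    and g: "g > 0"
    using assms by auto
  define S where "S \<omega> = (\<Sum>i=1..I. E i \<omega>)" for \<omega>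
  define Y where "Y \<omega> = F \<omega> + S \<omega>" for \<omega>
  define Xs where "Xs k = [A, S, F, Z] ! k" for k
  have ind4: "indep_vars (\<lambda>_. borel) Xs {0..<4}"
    using assms(11) unfolding Xs_def S_def[abs_def] .
  have rvXs: "\<And>k. k \<in> {0..<4} \<Longrightarrow> Xs k \<in> borel_measurable M"
    using ind4 unfolding indep_vars_def by auto
  have [measurable]: "A \<in> borel_measurable M" "S \<in> borel_measurable M" "F \<in> borel_measurable M" "Z \<in> borel_measurable M"
    using rvXs[of 0] rvXs[of 1] rvXs[of 2] rvXs[of 3] by (auto simp: Xs_def)
  have [measurable]: "Y \<in> borel_measurable M" unfolding Y_def[abs_def] by measurable
  define L where "L s = le / (le + s) * (\<Prod>i\<in>{1..I}. l i / (l i + s))" for s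
  define G2 where "G2 y z = (if 0 \<le> y * (g - z) then 1 - exp (- (y * (g - z)) * lh) else 0)" for y z
  define H where "H z = (if z \<le> g then 1 - L (lh * (g - z)) else 0)" for z
  define Ev where "Ev = {\<omega> \<in> space M. A \<omega> / (F \<omega> + (\<Sum>i=1..I. E i \<omega>)) + Z \<omega> < g}"
  define Ival where "Ival = (\<Sum>i=1..I.
       let c = (\<Prod>j\<in>{1..I} - {i}. l j / (l j - l i));
           a = (\<lambda>x. x / (lg * lh));
           b = (\<lambda>x. (x + lh * g) / (lg * lh))
       in c / (lg ^ 3 * lh\<^sup>2 * (l i - le)) *
          (lg * exp (- (le + l i + lh * g) / (lg * lh)) *
             (exp (a (l i)) *
                (le * l i * (le + lh * g) * (Ei (a le) - Ei (b le))
                 + lg * lh\<^sup>2 * (le - l i) * (lg + g) * exp (a le))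
              - le * l i * exp (a le) * (l i + lh * g) * (Ei (a (l i)) - Ei (b (l i))))
           + lg ^ 3 * lh\<^sup>2 * (l i - le)))"
  have kint: "((\<lambda>z. z / lg\<^sup>2 * exp (- z / lg) * (1 - L (lh * (g - z)))) has_integral Ival) {0..g}"
    unfolding L_def Ival_def using k_integral[OF I lh lg le g lpos inj lne] .

  have L01: "0 \<le> L s \<and> L s \<le> 1" if "0 \<le> s" for s
  proof -
    have p: "0 \<le> (\<Prod>i\<in>{1..I}. l i / (l i + s))" "(\<Prod>i\<in>{1..I}. l i / (l i + s)) \<le> 1"
      using lpos that by (auto intro!: prod_nonneg prod_le_1)
    have q: "0 \<le> le / (le + s)" "le / (le + s) \<le> 1" using le that by auto
    show ?thesis unfolding L_def using mult_le_one[OF q(2) p(1) p(2)] mult_nonneg_nonneg[OF q(1) p(1)] by blast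
  qed
  have AEY: "AE \<omega> in M. 0 < Y \<omega>"
  proof -
    have "AE \<omega> in M. 0 < F \<omega>" by (rule expo_AE_pos[OF prob le dF])
    moreover have "AE \<omega> in M. \<forall>i\<in>{1..I}. 0 < E i \<omega>"
    proof (rule AE_finite_allI)
      fix i assume "i \<in> {1..I}"
      then show "AE \<omega> in M. 0 < E i \<omega>" using expo_AE_pos[OF prob, of "l i" "E i"] dE lpos by auto
    qed simp
    ultimately show ?thesis
    proof eventually_elim
      case (elim \<omega>)
      then have "0 \<le> S \<omega>" unfolding S_def by (intro sum_nonneg) (auto simp: less_imp_le)
      with elim show ?case by (simp add: Y_def)
    qed
  qed
  have Lap: "(\<integral>\<^sup>+\<omega>. ennreal (exp (- s * Y \<omega>)) \<partial>M) = ennreal (L s)" if s: "0 \<le> s" for s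
  proof -
    have indFS: "indep_var borel (\<lambda>\<omega>. exp (- s * F \<omega>)) borel (\<lambda>\<omega>. exp (- s * S \<omega>))"
    proof -
      have "indep_var borel (\<lambda>\<omega>. (\<lambda>x. exp (- s * x 2)) (\<lambda>i\<in>{2}. Xs i \<omega>)) borel
          (\<lambda>\<omega>. (\<lambda>x. exp (- s * x 1)) (\<lambda>i\<in>{1}. Xs i \<omega>))"
        by (rule indep_pair_from[OF prob ind4]) (auto, measurable)
      then show ?thesis by (simp add: Xs_def)
    qed
    have pw: "exp (- s * Y \<omega>) = exp (- s * F \<omega>) * exp (- s * S \<omega>)" for \<omega>
      unfolding Y_def exp_add[symmetric] by (simp add: algebra_simps)
    have Sprod: "exp (- s * S \<omega>) = (\<Prod>i\<in>{1..I}. exp (- s * E i \<omega>))" for \<omega>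
    proof -
      have "- s * S \<omega> = (\<Sum>i\<in>{1..I}. - s * E i \<omega>)" by (simp add: S_def sum_distrib_left)
      then show ?thesis by (simp add: exp_sum)
    qed
    have indE': "indep_vars (\<lambda>_. borel) (\<lambda>i \<omega>. ennreal (exp (- s * E i \<omega>))) {1..I}"
      by (rule indep_vars_compose2[OF indE, where Y="\<lambda>i x. ennreal (exp (- s * x))"]) simp
    have "(\<integral>\<^sup>+\<omega>. ennreal (exp (- s * S \<omega>)) \<partial>M) = (\<integral>\<^sup>+\<omega>. (\<Prod>i\<in>{1..I}. ennreal (exp (- s * E i \<omega>))) \<partial>M)"
    proof (intro nn_integral_cong)
      fix \<omega>
      have "(\<Prod>i\<in>{1..I}. ennreal (exp (- s * E i \<omega>))) = ennreal (\<Prod>i\<in>{1..I}. exp (- s * E i \<omega>))"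
        by (rule prod_ennreal) simp
      then show "ennreal (exp (- s * S \<omega>)) = (\<Prod>i\<in>{1..I}. ennreal (exp (- s * E i \<omega>)))"
        unfolding Sprod by simp
    qed
    also have "\<dots> = (\<Prod>i\<in>{1..I}. \<integral>\<^sup>+\<omega>. ennreal (exp (- s * E i \<omega>)) \<partial>M)"
      by (rule indep_vars_nn_integral[OF _ indE']) auto
    also have "\<dots> = (\<Prod>i\<in>{1..I}. ennreal (l i / (l i + s)))"
    proof (rule prod.cong[OF refl])
      fix i assume "i \<in> {1..I}"
      then show "(\<integral>\<^sup>+\<omega>. ennreal (exp (- s * E i \<omega>)) \<partial>M) = ennreal (l i / (l i + s))"
        using expo_laplace[OF prob _ s, of "l i" "E i"] lpos dE by auto
    qed
    also have "\<dots> = ennreal (\<Prod>i\<in>{1..I}. l i / (l i + s))"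
    proof (intro prod_ennreal)
      fix i assume "i \<in> {1..I}"
      then have "0 < l i" using lpos by auto
      then show "0 \<le> l i / (l i + s)" using s by simp
    qed
    finally have PS: "(\<integral>\<^sup>+\<omega>. ennreal (exp (- s * S \<omega>)) \<partial>M) = ennreal (\<Prod>i\<in>{1..I}. l i / (l i + s))" .
    have "(\<integral>\<^sup>+\<omega>. ennreal (exp (- s * Y \<omega>)) \<partial>M) = (\<integral>\<^sup>+\<omega>. ennreal (exp (- s * F \<omega>) * exp (- s * S \<omega>)) \<partial>M)"
      unfolding pw ..
    also have "\<dots> = (\<integral>\<^sup>+\<omega>. ennreal (exp (- s * F \<omega>)) \<partial>M) * (\<integral>\<^sup>+\<omega>. ennreal (exp (- s * S \<omega>)) \<partial>M)"
      by (rule indep_var_nn[OF prob indFS]) auto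
    also have "\<dots> = ennreal (le / (le + s)) * ennreal (\<Prod>i\<in>{1..I}. l i / (l i + s))"
      unfolding PS expo_laplace[OF prob le s dF] ..
    also have "\<dots> = ennreal (L s)"
    proof -
      have "0 \<le> (\<Prod>i\<in>{1..I}. l i / (l i + s))"
      proof (intro prod_nonneg)
        fix i assume "i \<in> {1..I}"
        then have "0 < l i" using lpos by auto
        then show "0 \<le> l i / (l i + s)" using s by simp
      qed
      then show ?thesis unfolding L_def using le s by (simp add: ennreal_mult[symmetric])
    qed
    finally show ?thesis .
  qed
  have indAW: "indep_var borel (\<lambda>\<omega>. (A \<omega>, 0::real)) borel (\<lambda>\<omega>. (Y \<omega>, Z \<omega>))"
  proof -
    have "indep_var borel (\<lambda>\<omega>. (\<lambda>x. (x 0, 0::real)) (\<lambda>i\<in>{0}. Xs i \<omega>)) borel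
        (\<lambda>\<omega>. (\<lambda>x. (x 2 + x 1, x 3)) (\<lambda>i\<in>{1,2,3}. Xs i \<omega>))"
      by (rule indep_pair_from[OF prob ind4]) (auto, measurable)
    then show ?thesis by (simp add: Xs_def Y_def)
  qed
  have indYZ: "indep_var borel Y borel Z"
  proof -
    have "indep_var borel (\<lambda>\<omega>. (\<lambda>x. x 2 + x 1) (\<lambda>i\<in>{1,2}. Xs i \<omega>)) borel
        (\<lambda>\<omega>. (\<lambda>x. x 3) (\<lambda>i\<in>{3}. Xs i \<omega>))"
      by (rule indep_pair_from[OF prob ind4]) (auto, measurable)
    then show ?thesis by (simp add: Xs_def Y_def[abs_def])
  qed

  define hA where "hA q = (if fst (fst q) / fst (snd q) + snd (snd q) < g then 1 else 0 :: ennreal)"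
    for q :: "(real \<times> real) \<times> (real \<times> real)"
  have hA_m: "hA \<in> borel_measurable (borel \<Otimes>\<^sub>M borel)"
  proof -
    have "hA \<in> borel_measurable ((borel \<Otimes>\<^sub>M borel) \<Otimes>\<^sub>M (borel \<Otimes>\<^sub>M borel))"
      unfolding hA_def by measurable
    then show ?thesis by (simp only: borel_prod)
  qed
  have Ev_eq: "Ev = {\<omega> \<in> space M. A \<omega> / Y \<omega> + Z \<omega> < g}"
    by (simp add: Ev_def Y_def S_def)
  have Ev_m: "Ev \<in> sets M" unfolding Ev_eq by measurable
  have E1: "emeasure M Ev = (\<integral>\<^sup>+\<omega>. hA ((A \<omega>, 0), (Y \<omega>, Z \<omega>)) \<partial>M)"
    unfolding nn_integral_indicator[OF Ev_m, symmetric]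
    by (intro nn_integral_cong) (simp add: Ev_eq hA_def indicator_def)
  also have E2: "\<dots> = (\<integral>\<^sup>+\<omega>. (\<integral>\<^sup>+x. hA (x, (Y \<omega>, Z \<omega>)) \<partial>distr M borel (\<lambda>\<omega>. (A \<omega>, 0::real))) \<partial>M)"
    by (rule freeze[OF prob indAW hA_m])
  also have E3: "\<dots> = (\<integral>\<^sup>+\<omega>. ennreal (G2 (Y \<omega>) (Z \<omega>)) \<partial>M)"
  proof (rule nn_integral_cong_AE)
    have inner1: "(\<integral>\<^sup>+x. hA (x, (y, z)) \<partial>distr M borel (\<lambda>\<omega>. (A \<omega>, 0::real))) = ennreal (G2 y z)"
      if y: "0 < y" for y z
    proof -
      have "(\<integral>\<^sup>+x. hA (x, (y, z)) \<partial>distr M borel (\<lambda>\<omega>. (A \<omega>, 0::real))) = (\<integral>\<^sup>+\<omega>. hA ((A \<omega>, 0), (y, z)) \<partial>M)"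
      proof -
        have "(\<lambda>x. hA (x, (y, z))) \<in> borel_measurable borel"
          by (rule measurable_compose[OF _ hA_m]) measurable
        then show ?thesis by (subst nn_integral_distr) auto
      qed
      also have "\<dots> = (\<integral>\<^sup>+\<omega>. indicator {..<y * (g - z)} (A \<omega>) \<partial>M)"
      proof (intro nn_integral_cong)
        fix \<omega>
        have "A \<omega> / y + z < g \<longleftrightarrow> A \<omega> < y * (g - z)"
          using y by (simp add: field_simps)
        then show "hA ((A \<omega>, 0), (y, z)) = indicator {..<y * (g - z)} (A \<omega>)"
          by (simp add: hA_def indicator_def)
      qed
      also have "\<dots> = (\<integral>\<^sup>+a. ennreal (exponential_density lh a) * indicator {..<y * (g - z)} a \<partial>lborel)"
        by (rule distributed_nn_integral[OF dA, symmetric]) simp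
      also have "\<dots> = ennreal (G2 y z)"
        unfolding expo_lt[OF lh] G2_def by simp
      finally show ?thesis .
    qed
    show "AE \<omega> in M. (\<integral>\<^sup>+x. hA (x, (Y \<omega>, Z \<omega>)) \<partial>distr M borel (\<lambda>\<omega>. (A \<omega>, 0::real))) = ennreal (G2 (Y \<omega>) (Z \<omega>))"
      using AEY by eventually_elim (rule inner1)
  qed
  also have E4: "\<dots> = (\<integral>\<^sup>+\<omega>. (\<integral>\<^sup>+y. ennreal (G2 y (Z \<omega>)) \<partial>distr M borel Y) \<partial>M)"
  proof -
    have "(\<lambda>p. ennreal (G2 (fst p) (snd p))) \<in> borel_measurable (borel \<Otimes>\<^sub>M borel)"
      unfolding G2_def by measurable
    from freeze[OF prob indYZ this] show ?thesis by simp
  qed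
  also have E5: "\<dots> = (\<integral>\<^sup>+\<omega>. ennreal (H (Z \<omega>)) \<partial>M)"
  proof (intro nn_integral_cong)
    fix \<omega>
    define z where "z = Z \<omega>"
    have G2m: "(\<lambda>y. ennreal (G2 y z)) \<in> borel_measurable borel" unfolding G2_def by measurable
    have d: "(\<integral>\<^sup>+y. ennreal (G2 y z) \<partial>distr M borel Y) = (\<integral>\<^sup>+\<omega>. ennreal (G2 (Y \<omega>) z) \<partial>M)"
      using G2m by (subst nn_integral_distr) auto
    have "(\<integral>\<^sup>+\<omega>. ennreal (G2 (Y \<omega>) z) \<partial>M) = ennreal (H z)"
    proof (cases "z \<le> g")
      case True
      define s where "s = lh * (g - z)"
      have s: "0 \<le> s" using True lh by (simp add: s_def)
      have ae: "AE \<omega> in M. G2 (Y \<omega>) z = 1 - exp (- s * Y \<omega>)"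
        using AEY
      proof eventually_elim
        case (elim \<omega>)
        have "0 \<le> Y \<omega> * (g - z)" using elim True by simp
        moreover have "- (Y \<omega> * (g - z)) * lh = - s * Y \<omega>" by (simp add: s_def algebra_simps)
        ultimately show ?case by (simp add: G2_def)
      qed
      have int_e: "integrable M (\<lambda>\<omega>. exp (- s * Y \<omega>))"
      proof (rule integrable_const_bound[where B=1])
        show "AE \<omega> in M. norm (exp (- s * Y \<omega>)) \<le> 1"
          using AEY by eventually_elim (use s in \<open>simp add: mult_nonneg_nonneg less_imp_le\<close>)
      qed simp
      have Ie: "integral\<^sup>L M (\<lambda>\<omega>. exp (- s * Y \<omega>)) = L s"
        using integral_eq_nn_integral[of "\<lambda>\<omega>. exp (- s * Y \<omega>)" M] Lap[OF s] L01[OF s] by simp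
      have nn: "AE \<omega> in M. 0 \<le> 1 - exp (- s * Y \<omega>)"
        using AEY by eventually_elim (use s in \<open>simp add: mult_nonneg_nonneg less_imp_le\<close>)
      have "(\<integral>\<^sup>+\<omega>. ennreal (G2 (Y \<omega>) z) \<partial>M) = (\<integral>\<^sup>+\<omega>. ennreal (1 - exp (- s * Y \<omega>)) \<partial>M)"
        by (rule nn_integral_cong_AE) (use ae in eventually_elim, simp)
      also have "\<dots> = ennreal (integral\<^sup>L M (\<lambda>\<omega>. 1 - exp (- s * Y \<omega>)))"
        by (rule nn_integral_eq_integral[OF Bochner_Integration.integrable_diff[OF integrable_const int_e] nn])
      also have "integral\<^sup>L M (\<lambda>\<omega>. 1 - exp (- s * Y \<omega>)) = 1 - L s"
        by (subst Bochner_Integration.integral_diff[OF integrable_const int_e], unfold Ie) (simp add: prob_space)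
      finally show ?thesis using True by (simp add: H_def s_def)
    next
      case False
      have "AE \<omega> in M. G2 (Y \<omega>) z = 0"
        using AEY
      proof eventually_elim
        case (elim \<omega>)
        have "Y \<omega> * (g - z) < 0" using elim False by (simp add: mult_pos_neg)
        then show ?case by (simp add: G2_def)
      qed
      then have "(\<integral>\<^sup>+\<omega>. ennreal (G2 (Y \<omega>) z) \<partial>M) = (\<integral>\<^sup>+\<omega>. 0 \<partial>M)"
        by (intro nn_integral_cong_AE) (auto elim: eventually_mono)
      then show ?thesis using False by (simp add: H_def)
    qed
    then show "(\<integral>\<^sup>+y. ennreal (G2 y (Z \<omega>)) \<partial>distr M borel Y) = ennreal (H (Z \<omega>))"
      using d by (simp add: z_def)
  qed
  also have E6: "\<dots> = (\<integral>\<^sup>+z. ennreal (if z > 0 then z / lg\<^sup>2 * exp (- z / lg) else 0) * ennreal (H z) \<partial>lborel)"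
    by (rule distributed_nn_integral[OF dZ, symmetric]) (unfold H_def L_def, measurable)
  also have E7: "\<dots> = (\<integral>\<^sup>+z. ennreal (z / lg\<^sup>2 * exp (- z / lg) * (1 - L (lh * (g - z)))) * indicator {0..g} z \<partial>lborel)"
  proof (intro nn_integral_cong)
    fix z :: real
    show "ennreal (if z > 0 then z / lg\<^sup>2 * exp (- z / lg) else 0) * ennreal (H z)
        = ennreal (z / lg\<^sup>2 * exp (- z / lg) * (1 - L (lh * (g - z)))) * indicator {0..g} z"
    proof (cases "0 < z \<and> z \<le> g")
      case True
      then have "0 \<le> 1 - L (lh * (g - z))" using L01[of "lh * (g - z)"] lh by simp
      moreover have "0 \<le> z / lg\<^sup>2 * exp (- z / lg)" using True lg by simp
      ultimately show ?thesis using True by (simp add: H_def ennreal_mult[symmetric])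
    next
      case False
      then show ?thesis by (auto simp: H_def indicator_def)
    qed
  qed
  also have E8: "\<dots> = ennreal Ival"
    by (rule nn_integral_has_integral_lebesgue'[OF _ kint]) (use L01 lh lg in \<open>auto intro!: mult_nonneg_nonneg\<close>)
  finally have em: "emeasure M Ev = ennreal Ival" .
  have "0 \<le> Ival"
    by (rule has_integral_nonneg[OF kint]) (use L01 lh lg in \<open>auto intro!: mult_nonneg_nonneg\<close>)
  then have "measure M Ev = Ival" using em by (simp add: measure_def)
  then show ?thesis unfolding Ev_def Ival_def .
qed

end
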